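(* Let $N, D \ge 1$, let $X \in \mathbb{R}^{N\times D}$ have rows $x_1,\ldots,x_N$, and let $\lambda^2>0$, $\rho^2>0$. For $\sigma^2>0$ set $\theta = \exp(-\lambda^2/(2\sigma^2))$. For a clustering $(K^+, Z)$ define $p(X,Z) = p(X\mid Z)\,p(Z)$ where $p(Z) = \theta^{K^+-1}\frac{\Gamma(\theta+1)}{\Gamma(\theta+N)}\prod_{k=1}^{K^+}(S_{N,k}-1)!$ and $p(X\mid Z) = \int p(X \mid Z, A)\, p(A)\, dA$ with $p(X\mid Z,A) = (2\pi\sigma^2)^{-ND/2}\exp\{-\operatorname{tr}((X-ZA)'(X-ZA))/(2\sigma^2)\}$ and the rows of $A\in\mathbb{R}^{K^+\times D}$ i.i.d. $\mathcal{N}(0,\rho^2 I_D)$ under $p(A)$. Then for fixed $K^+, Z$, as $\sigma^2\to 0$, $$-2\sigma^2\log p(X,Z) \sim \operatorname{tr}\big(X'(I_N - Z(Z'Z)^{-1}Z')X\big) + (K^+-1)\lambda^2,$$ so the MAP problem for $Z$ is asymptotically equivalent to $\operatorname{argmin}_{K^+,Z} \operatorname{tr}(X'(I_N - Z(Z'Z)^{-1}Z')X) + (K^+-1)\lambda^2$, which equals $\operatorname{argmin}_{K^+,Z}\sum_{k=1}^{K^+}\sum_{n: z_{nk}=1}\|x_n - \bar x^{(k)}\|_2^2 + (K^+-1)\lambda^2$, where $\bar x^{(k)} = S_{N,k}^{-1}\sum_{m: z_{mk}=1} x_m$.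
   Context: A clustering is an integer $K^+\ge 1$ and a matrix $Z=(z_{nk})\in\{0,1\}^{N\times K^+}$ with exactly one $1$ in each row and every column nonzero; $S_{N,k}=\sum_n z_{nk}$. $p(Z)$ is the Chinese restaurant process probability with concentration $\theta$. $f(\sigma^2)\sim g(\sigma^2)$ means $f(\sigma^2)/g(\sigma^2)\to1$ as $\sigma^2\to0$. *)

theory Defs
  imports "HOL-Analysis.Analysis" "HOL-Probability.Probability" "HOL-Library.Landau_Symbols"
begin

text \<open>A clustering: rows of Z indexed by type 'n (N = CARD('n)), columns by type 'k
 (K+ = CARD('k)); entries in {0,1}, exactly one 1 per row, every column nonzero.\<close>
definition clustering :: "real^'k^'n \<Rightarrow> bool" where
  "clustering Z \<longleftrightarrow> (\<forall>n k. Z$n$k = 0 \<or> Z$n$k = 1) \<and> (\<forall>n. \<exists>!k. Z$n$k = 1)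
     \<and> (\<forall>k. \<exists>n. Z$n$k \<noteq> 0)"

definition csize :: "real^'k^'n \<Rightarrow> 'k \<Rightarrow> nat" where
  "csize Z k = card {n. Z$n$k = 1}"

definition crp_prob :: "real \<Rightarrow> real^'k^'n \<Rightarrow> real" where
  "crp_prob \<theta> Z = \<theta> ^ (CARD('k) - 1) * Gamma (\<theta> + 1) / Gamma (\<theta> + real CARD('n))
     * (\<Prod>k\<in>UNIV. fact (csize Z k - 1))"

definition lik :: "real \<Rightarrow> real^'d^'n \<Rightarrow> real^'k^'n \<Rightarrow> real^'d^'k \<Rightarrow> real" where
  "lik s2 X Z A = (2 * pi * s2) powr (- real (CARD('n) * CARD('d)) / 2)
     * exp (- trace (transpose (X - Z ** A) ** (X - Z ** A)) / (2 * s2))"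

text \<open>Prior density p(A): rows of A i.i.d. N(0, rho2 I_D), i.e. all entries i.i.d. N(0,rho2).\<close>
definition prior_dens :: "real \<Rightarrow> real^'d^'k \<Rightarrow> real" where
  "prior_dens rho2 A = (\<Prod>k\<in>UNIV. \<Prod>d\<in>UNIV. normal_density 0 (sqrt rho2) (A$k$d))"

definition marg_lik :: "real \<Rightarrow> real \<Rightarrow> real^'d^'n \<Rightarrow> real^'k^'n \<Rightarrow> real" where
  "marg_lik s2 rho2 X Z = (LINT A|lborel. lik s2 X Z A * prior_dens rho2 A)"

definition joint :: "real \<Rightarrow> real \<Rightarrow> real \<Rightarrow> real^'d^'n \<Rightarrow> real^'k^'n \<Rightarrow> real" where
  "joint lambda2 rho2 s2 X Z =
     marg_lik s2 rho2 X Z * crp_prob (exp (- lambda2 / (2 * s2))) Z"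

definition cmean :: "real^'d^'n \<Rightarrow> real^'k^'n \<Rightarrow> 'k \<Rightarrow> real^'d" where
  "cmean X Z k = (1 / real (csize Z k)) *\<^sub>R (\<Sum>m\<in>{m. Z$m$k = 1}. X$m)"

definition proj_obj :: "real \<Rightarrow> real^'d^'n \<Rightarrow> real^'k^'n \<Rightarrow> real" where
  "proj_obj lambda2 X Z =
     trace (transpose X ** (mat 1 - Z ** matrix_inv (transpose Z ** Z) ** transpose Z) ** X)
     + (real CARD('k) - 1) * lambda2"

definition kmeans_obj :: "real \<Rightarrow> real^'d^'n \<Rightarrow> real^'k^'n \<Rightarrow> real" where
  "kmeans_obj lambda2 X Z =
     (\<Sum>k\<in>UNIV. \<Sum>n\<in>{n. Z$n$k = 1}. (norm (X$n - cmean X Z k))\<^sup>2)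
     + (real CARD('k) - 1) * lambda2"

end

theory Submission
  imports Defs "HOL-Real_Asymp.Real_Asymp"
begin

definition cl :: "real^'k^'n \<Rightarrow> 'n \<Rightarrow> 'k" where
  "cl Z n = (THE k. Z$n$k = 1)"

lemma cl_eq:
  assumes "clustering Z"
  shows "Z$n$k = (if k = cl Z n then 1 else 0)"
proof -
  from assms have ex: "\<exists>!k. Z$n$k = 1" and zo: "\<forall>k. Z$n$k = 0 \<or> Z$n$k = 1"
    unfolding clustering_def by auto
  have c: "Z$n$(cl Z n) = 1" unfolding cl_def using theI'[OF ex] .
  show ?thesis
  proof (cases "k = cl Z n")
    case True then show ?thesis using c by simp
  next
    case False
    then have "Z$n$k \<noteq> 1" using ex c by blast
    then show ?thesis using zo False by auto
  qed
qed

lemma cl_set: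
  assumes "clustering Z"
  shows "{n. Z$n$k = 1} = {n. cl Z n = k}"
  using cl_eq[OF assms] by auto

lemma csize_pos:
  assumes "clustering Z"
  shows "csize Z k > 0"
proof -
  from assms obtain n where "Z$n$k \<noteq> 0" unfolding clustering_def by blast
  then have "cl Z n = k" using cl_eq[OF assms, of n k] by (auto split: if_splits)
  then have "{n. cl Z n = k} \<noteq> {}" by auto
  then show ?thesis unfolding csize_def cl_set[OF assms] by (simp add: card_gt_0_iff)
qed

lemma csize_cl: "clustering Z \<Longrightarrow> csize Z k = card {n. cl Z n = k}"
  unfolding csize_def by (simp add: cl_set)

lemma cmean_comp:
  assumes "clustering Z"
  shows "cmean X Z k $ d = (\<Sum>m\<in>{m. cl Z m = k}. X$m$d) / real (csize Z k)"
  unfolding cmean_def cl_set[OF assms] by (simp add: sum_component)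

lemma ZA:
  assumes "clustering Z" shows "(Z ** A)$n$d = A$(cl Z n)$d"
proof -
  have "(\<Sum>k\<in>UNIV. Z$n$k * A$k$d) = (\<Sum>k\<in>UNIV. if k = cl Z n then A$k$d else 0)"
    by (rule sum.cong) (simp_all add: cl_eq[OF assms])
  then show ?thesis by (simp add: matrix_matrix_mult_def)
qed

lemma trace_sq: "trace (transpose Y ** Y) = (\<Sum>n\<in>UNIV. \<Sum>d\<in>UNIV. (Y$n$d)^2)"
  unfolding trace_def by (simp add: matrix_matrix_mult_def transpose_def power2_eq_square) (rule sum.swap)

lemma sum_by_cluster:
  fixes Z :: "real^'k::finite^'n::finite" and f :: "'n \<Rightarrow> 'a::comm_monoid_add"
  shows "(\<Sum>n\<in>UNIV. f n) = (\<Sum>k\<in>UNIV. \<Sum>n\<in>{n. cl Z n = k}. f n)"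
  using sum.group[of "UNIV::'n::finite set" "UNIV::'k::finite set" "cl Z" f] by simp

lemma cluster_sum_zero:
  fixes Z :: "real^'k^'n" and X :: "real^'d^'n"
  assumes "clustering Z"
  shows "(\<Sum>n\<in>{n. cl Z n = k}. X$n$d - cmean X Z k $ d) = 0"
proof -
  have pos: "real (csize Z k) > 0" using csize_pos[OF assms] by simp
  have "(\<Sum>n\<in>{n. cl Z n = k}. X$n$d - cmean X Z k $ d)
      = (\<Sum>n\<in>{n. cl Z n = k}. X$n$d) - real (csize Z k) * cmean X Z k $ d"
    by (simp add: sum_subtractf csize_cl[OF assms])
  also have "\<dots> = 0" using pos by (simp add: cmean_comp[OF assms])
  finally show ?thesis .
qed

lemma cross_zero:
  fixes Z :: "real^'k^'n" and X :: "real^'d^'n"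
  assumes "clustering Z"
  shows "(\<Sum>n\<in>UNIV. h (cl Z n) * (X$n$d - cmean X Z (cl Z n) $ d)) = 0"
proof -
  have "(\<Sum>n\<in>UNIV. h (cl Z n) * (X$n$d - cmean X Z (cl Z n) $ d))
     = (\<Sum>k\<in>UNIV. \<Sum>n\<in>{n. cl Z n = k}. h k * (X$n$d - cmean X Z k $ d))"
    by (subst sum_by_cluster) (auto intro!: sum.cong)
  also have "\<dots> = (\<Sum>k\<in>UNIV. h k * (\<Sum>n\<in>{n. cl Z n = k}. X$n$d - cmean X Z k $ d))"
    by (simp add: sum_distrib_left)
  also have "\<dots> = 0" by (simp add: cluster_sum_zero[OF assms])
  finally show ?thesis .
qed

definition KM :: "real^'d^'n \<Rightarrow> real^'k^'n \<Rightarrow> real" where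
  "KM X Z = (\<Sum>n\<in>UNIV. \<Sum>d\<in>UNIV. (X$n$d - cmean X Z (cl Z n)$d)^2)"

definition Qf :: "real^'d^'n \<Rightarrow> real^'k^'n \<Rightarrow> real^'d^'k \<Rightarrow> real" where
  "Qf X Z A = (\<Sum>n\<in>UNIV. \<Sum>d\<in>UNIV. (cmean X Z (cl Z n)$d - A$(cl Z n)$d)^2)"

lemma Qf_nonneg: "Qf X Z A \<ge> 0"
  unfolding Qf_def by (intro sum_nonneg) auto

lemma tr_decomp:
  fixes X :: "real^'d^'n" and Z :: "real^'k^'n" and A :: "real^'d^'k"
  assumes cz: "clustering Z"
  shows "trace (transpose (X - Z ** A) ** (X - Z ** A)) = KM X Z + Qf X Z A"
proof -
  let ?M = "\<lambda>n d. cmean X Z (cl Z n)$d"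
  have "trace (transpose (X - Z ** A) ** (X - Z ** A))
      = (\<Sum>n\<in>UNIV. \<Sum>d\<in>UNIV. (X$n$d - A$(cl Z n)$d)^2)"
    by (simp add: trace_sq ZA[OF cz])
  also have "\<dots> = (\<Sum>n\<in>UNIV. \<Sum>d\<in>UNIV. (X$n$d - ?M n d)^2 + (?M n d - A$(cl Z n)$d)^2
      + (2 * (?M n d - A$(cl Z n)$d)) * (X$n$d - ?M n d))"
    by (intro sum.cong refl) (simp add: power2_eq_square algebra_simps)
  also have "\<dots> = KM X Z + Qf X Z A
      + (\<Sum>n\<in>UNIV. \<Sum>d\<in>UNIV. (2 * (?M n d - A$(cl Z n)$d)) * (X$n$d - ?M n d))"
    unfolding KM_def Qf_def by (simp only: sum.distrib)
  also have "(\<Sum>n\<in>UNIV. \<Sum>d\<in>UNIV. (2 * (?M n d - A$(cl Z n)$d)) * (X$n$d - ?M n d))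
      = (\<Sum>d\<in>UNIV. \<Sum>n\<in>UNIV. (2 * (?M n d - A$(cl Z n)$d)) * (X$n$d - ?M n d))"
    by (rule sum.swap)
  also have "(\<Sum>d\<in>UNIV. \<Sum>n\<in>UNIV. (2 * (?M n d - A$(cl Z n)$d)) * (X$n$d - ?M n d)) = 0"
  proof (rule sum.neutral, rule ballI)
    fix d
    show "(\<Sum>n\<in>UNIV. (2 * (?M n d - A$(cl Z n)$d)) * (X$n$d - ?M n d)) = 0"
      using cross_zero[OF cz, of "\<lambda>k. 2 * (cmean X Z k $ d - A$k$d)" X d] by simp
  qed
  finally show ?thesis by simp
qed

lemma norm_sq_vec: "(norm (v::real^'d))^2 = (\<Sum>d\<in>UNIV. (v$d)^2)"
  by (simp add: norm_vec_def L2_set_def sum_nonneg)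

lemma kmeans_KM:
  fixes X :: "real^'d^'n" and Z :: "real^'k^'n"
  assumes cz: "clustering Z"
  shows "kmeans_obj lambda2 X Z = KM X Z + (real CARD('k) - 1) * lambda2"
proof -
  have "(\<Sum>k\<in>UNIV. \<Sum>n\<in>{n. Z$n$k = 1}. (norm (X$n - cmean X Z k))\<^sup>2)
      = (\<Sum>k\<in>UNIV. \<Sum>n\<in>{n. cl Z n = k}. (norm (X$n - cmean X Z (cl Z n)))\<^sup>2)"
    by (intro sum.cong refl) (auto simp: cl_set[OF cz])
  also have "\<dots> = (\<Sum>n\<in>UNIV. (norm (X$n - cmean X Z (cl Z n)))\<^sup>2)"
    by (rule sum_by_cluster[symmetric])
  also have "\<dots> = KM X Z"
    unfolding KM_def
    by (intro sum.cong refl) (simp add: norm_sq_vec)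
  finally show ?thesis unfolding kmeans_obj_def by simp
qed

definition Dm :: "real^'k^'n \<Rightarrow> real^'k^'k" where
  "Dm Z = (\<chi> i j. if i = j then 1 / real (csize Z i) else 0)"

lemma gram:
  fixes Z :: "real^'k^'n"
  assumes cz: "clustering Z"
  shows "(transpose Z ** Z)$i$j = (if i = j then real (csize Z i) else 0)"
proof -
  have "(transpose Z ** Z)$i$j = (\<Sum>n\<in>UNIV. Z$n$i * Z$n$j)"
    by (simp add: matrix_matrix_mult_def transpose_def)
  also have "\<dots> = (\<Sum>n\<in>UNIV. if i = j \<and> cl Z n = i then 1 else 0)"
    by (intro sum.cong refl) (auto simp: cl_eq[OF cz])
  also have "\<dots> = (if i = j then real (csize Z i) else 0)"
    by (auto simp: csize_cl[OF cz] sum.If_cases Collect_conv_if)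
  finally show ?thesis .
qed

lemma matrix_inv_eqI:
  fixes A :: "'a::comm_ring_1^'n^'n"
  assumes "A ** B = mat 1" "B ** A = mat 1"
  shows "matrix_inv A = B"
proof -
  have ex: "\<exists>B'. A ** B' = mat 1 \<and> B' ** A = mat 1" using assms by blast
  define B' where "B' = matrix_inv A"
  have h: "A ** B' = mat 1 \<and> B' ** A = mat 1"
    unfolding B'_def matrix_inv_def by (rule someI_ex[OF ex])
  have "B' = B' ** (A ** B)" using assms by (simp add: matrix_mul_rid)
  also have "\<dots> = (B' ** A) ** B" by (simp add: matrix_mul_assoc)
  also have "\<dots> = B" using h by (simp add: matrix_mul_lid)
  finally show ?thesis unfolding B'_def .
qed

lemma diag_mult:
  fixes a b :: "'k::finite \<Rightarrow> real"
  shows "(\<chi> i j. if i = j then a i else 0) ** (\<chi> i j. if i = j then b i else 0)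
     = (\<chi> i j. if i = j then a i * b i else 0 :: real^'k^'k)"
proof -
  have "\<And>i j. (\<Sum>k\<in>UNIV. (if i = k then a i else 0) * (if k = j then b k else 0))
     = (\<Sum>k\<in>UNIV. if k = i then (if i = j then a i * b i else 0) else 0)"
    by (intro sum.cong refl) auto
  then show ?thesis by (simp add: matrix_matrix_mult_def vec_eq_iff)
qed

lemma mat1_diag: "(mat 1 :: real^'k^'k) = (\<chi> i j. if i = j then 1 else 0)"
  by (simp add: mat_def vec_eq_iff)

lemma inv_gram:
  fixes Z :: "real^'k^'n"
  assumes cz: "clustering Z"
  shows "matrix_inv (transpose Z ** Z) = Dm Z"
proof (rule matrix_inv_eqI)
  have pos: "\<And>i. real (csize Z i) \<noteq> 0" using csize_pos[OF cz] by (simp add: )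
  have G: "transpose Z ** Z = (\<chi> i j. if i = j then real (csize Z i) else 0)"
    by (simp add: vec_eq_iff gram[OF cz])
  have e1: "(\<chi> i j. if i = j then real (csize Z i) * (1 / real (csize Z i)) else 0) = (\<chi> i j. if i = j then 1 else 0 :: real^'k^'k)"
    using pos by (simp add: vec_eq_iff)
  have e2: "(\<chi> i j. if i = j then (1 / real (csize Z i)) * real (csize Z i) else 0) = (\<chi> i j. if i = j then 1 else 0 :: real^'k^'k)"
    using pos by (simp add: vec_eq_iff)
  show "transpose Z ** Z ** Dm Z = mat 1"
    unfolding G Dm_def diag_mult mat1_diag e1 ..
  show "Dm Z ** (transpose Z ** Z) = mat 1"
    unfolding G Dm_def diag_mult mat1_diag e2 ..
qed

lemma ZDm: 
  fixes Z :: "real^'k^'n"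
  assumes cz: "clustering Z"
  shows "(Z ** Dm Z ** transpose Z)$n$m = (if cl Z m = cl Z n then 1 / real (csize Z (cl Z n)) else 0)"
proof -
  have "(Z ** Dm Z ** transpose Z)$n$m = (\<Sum>j\<in>UNIV. (Z ** Dm Z)$n$j * Z$m$j)"
    by (simp add: matrix_matrix_mult_def transpose_def)
  also have "\<dots> = (\<Sum>j\<in>UNIV. if j = cl Z m then (Z ** Dm Z)$n$j else 0)"
    by (intro sum.cong refl) (simp add: cl_eq[OF cz])
  also have "\<dots> = (Z ** Dm Z)$n$(cl Z m)" by simp
  also have "\<dots> = (if cl Z m = cl Z n then 1 / real (csize Z (cl Z n)) else 0)"
    by (simp add: ZA[OF cz] Dm_def)
  finally show ?thesis .
qed

lemma trace3:
  fixes X :: "real^'d^'n" and W :: "real^'n^'n"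
  shows "trace (transpose X ** W ** X) = (\<Sum>d\<in>UNIV. \<Sum>n\<in>UNIV. X$n$d * (\<Sum>m\<in>UNIV. W$n$m * X$m$d))"
  unfolding trace_def
  apply (simp add: matrix_matrix_mult_def transpose_def sum_distrib_left sum_distrib_right mult.assoc)
  apply (rule sum.cong[OF refl])
  apply (rule sum.swap)
  done

lemma proj_KM:
  fixes X :: "real^'d^'n" and Z :: "real^'k^'n"
  assumes cz: "clustering Z"
  shows "proj_obj lambda2 X Z = KM X Z + (real CARD('k) - 1) * lambda2"
proof -
  let ?W = "mat 1 - Z ** Dm Z ** transpose Z"
  have inner: "(\<Sum>m\<in>UNIV. ?W$n$m * X$m$d) = X$n$d - cmean X Z (cl Z n) $ d" for n d
  proof -
    have "(\<Sum>m\<in>UNIV. ?W$n$m * X$m$d) = (\<Sum>m\<in>UNIV. (if m = n then X$m$d else 0))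
       - (\<Sum>m\<in>UNIV. if cl Z m = cl Z n then X$m$d / real (csize Z (cl Z n)) else 0)"
    proof -
      have "\<And>m. ?W$n$m * X$m$d = (if m = n then X$m$d else 0)
         - (if cl Z m = cl Z n then X$m$d / real (csize Z (cl Z n)) else 0)"
        by (simp add: ZDm[OF cz] mat_def left_diff_distrib)
      then show ?thesis by (simp add: sum_subtractf)
    qed
    also have "\<dots> = X$n$d - (\<Sum>m\<in>{m. cl Z m = cl Z n}. X$m$d) / real (csize Z (cl Z n))"
      by (simp add: sum.If_cases sum_divide_distrib)
    also have "\<dots> = X$n$d - cmean X Z (cl Z n) $ d"
      by (simp add: cmean_comp[OF cz])
    finally show ?thesis .
  qed
  have T: "trace (transpose X ** ?W ** X) = (\<Sum>d\<in>UNIV. \<Sum>n\<in>UNIV. X$n$d * (X$n$d - cmean X Z (cl Z n) $ d))"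
    unfolding trace3 inner ..
  have "KM X Z = (\<Sum>n\<in>UNIV. \<Sum>d\<in>UNIV. X$n$d * (X$n$d - cmean X Z (cl Z n)$d)
        - cmean X Z (cl Z n)$d * (X$n$d - cmean X Z (cl Z n)$d))"
    unfolding KM_def by (intro sum.cong refl) (simp add: power2_eq_square algebra_simps)
  also have "\<dots> = (\<Sum>n\<in>UNIV. \<Sum>d\<in>UNIV. X$n$d * (X$n$d - cmean X Z (cl Z n)$d))
      - (\<Sum>n\<in>UNIV. \<Sum>d\<in>UNIV. cmean X Z (cl Z n)$d * (X$n$d - cmean X Z (cl Z n)$d))"
    by (simp only: sum_subtractf)
  also have "(\<Sum>n\<in>UNIV. \<Sum>d\<in>UNIV. cmean X Z (cl Z n)$d * (X$n$d - cmean X Z (cl Z n)$d))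
     = (\<Sum>d\<in>UNIV. \<Sum>n\<in>UNIV. cmean X Z (cl Z n)$d * (X$n$d - cmean X Z (cl Z n)$d))"
    by (rule sum.swap)
  also have "\<dots> = 0"
    by (rule sum.neutral, rule ballI, rule cross_zero[OF cz])
  also have "(\<Sum>n\<in>UNIV. \<Sum>d\<in>UNIV. X$n$d * (X$n$d - cmean X Z (cl Z n)$d))
     = (\<Sum>d\<in>UNIV. \<Sum>n\<in>UNIV. X$n$d * (X$n$d - cmean X Z (cl Z n)$d))"
    by (rule sum.swap)
  finally have "KM X Z = trace (transpose X ** ?W ** X)" using T by simp
  then show ?thesis unfolding proj_obj_def inv_gram[OF cz] by simp
qed

lemma basis_cases:
  assumes "(b::real^'d^'k) \<in> Basis"
  obtains k d where "b = axis k (axis d 1)"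
  using assms unfolding Basis_vec_def Basis_real_def by auto

lemma inner_axis2: "(A::real^'d^'k) \<bullet> axis k (axis d 1) = A$k$d"
  by (simp add: inner_axis)

lemma axis2_in_Basis: "axis k (axis d (1::real)) \<in> (Basis :: (real^'d^'k) set)"
  by simp

lemma Basis_image: "(Basis :: (real^'d^'k) set) = (\<lambda>(k,d). axis k (axis d 1)) ` UNIV"
proof
  show "(Basis :: (real^'d^'k) set) \<subseteq> (\<lambda>(k,d). axis k (axis d 1)) ` UNIV"
    by (auto elim!: basis_cases)
qed auto

lemma inj_axis2: "inj (\<lambda>(k,d). axis k (axis d (1::real)) :: real^'d^'k)"
  by (auto simp: inj_def axis_eq_axis)

lemma prod_Basis2:
  fixes f :: "real^'d^'k \<Rightarrow> real"
  shows "(\<Prod>b\<in>Basis. f b) = (\<Prod>k\<in>UNIV. \<Prod>d\<in>UNIV. f (axis k (axis d 1)))"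
proof -
  have "(\<Prod>b\<in>Basis. f b) = (\<Prod>p\<in>UNIV. f ((\<lambda>(k,d). axis k (axis d 1)) p))"
    unfolding Basis_image by (rule prod.reindex[OF inj_axis2[THEN inj_on_subset], simplified])
  also have "\<dots> = (\<Prod>k\<in>UNIV. \<Prod>d\<in>UNIV. f (axis k (axis d 1)))"
    unfolding UNIV_Times_UNIV[symmetric] prod.cartesian_product by (simp add: case_prod_unfold)
  finally show ?thesis .
qed

lemma prior_prod:
  "prior_dens rho2 (A::real^'d^'k) = (\<Prod>b\<in>Basis. normal_density 0 (sqrt rho2) (A \<bullet> b))"
  unfolding prior_dens_def prod_Basis2 inner_axis2 ..

lemma prior_meas: "prior_dens rho2 \<in> borel_measurable (lborel :: (real^'d^'k) measure)"
proof -
  have eq: "prior_dens rho2 = (\<lambda>A::real^'d^'k. \<Prod>b\<in>Basis. normal_density 0 (sqrt rho2) (A \<bullet> b))"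
    by (rule ext, rule prior_prod)
  have m: "(\<lambda>A::real^'d^'k. \<Prod>b\<in>Basis. normal_density 0 (sqrt rho2) (A \<bullet> b)) \<in> borel_measurable lborel"
    by measurable
  show ?thesis unfolding eq by (rule m)
qed

lemma prior_nonneg: "prior_dens rho2 A \<ge> 0"
  unfolding prior_dens_def by (intro prod_nonneg) auto

lemma prior_nn:
  assumes "rho2 > 0"
  shows "(\<integral>\<^sup>+A. ennreal (prior_dens rho2 (A::real^'d^'k)) \<partial>lborel) = 1"
proof -
  have s: "sqrt rho2 > 0" using assms by simp
  have one: "(\<integral>\<^sup>+x. ennreal (normal_density 0 (sqrt rho2) x) \<partial>lborel) = 1"
    using s by (simp add: nn_integral_eq_integral normal_density_nonneg)
  have "(\<integral>\<^sup>+A. ennreal (prior_dens rho2 (A::real^'d^'k)) \<partial>lborel)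
      = (\<integral>\<^sup>+A. (\<Prod>b\<in>Basis. ennreal (normal_density 0 (sqrt rho2) ((A::real^'d^'k) \<bullet> b))) \<partial>lborel)"
    unfolding prior_prod by (simp add: prod_ennreal normal_density_nonneg)
  also have "\<dots> = (\<Prod>b\<in>(Basis::(real^'d^'k) set). (\<integral>\<^sup>+x. ennreal (normal_density 0 (sqrt rho2) x) \<partial>lborel))"
    by (rule nn_integral_lborel_prod) auto
  also have "\<dots> = 1" unfolding one by simp
  finally show ?thesis .
qed

lemma prior_int:
  assumes "rho2 > 0"
  shows "integrable lborel (prior_dens rho2 :: real^'d^'k \<Rightarrow> real)"
    and "(LINT A|lborel. prior_dens rho2 (A::real^'d^'k)) = 1"
proof -
  show "integrable lborel (prior_dens rho2 :: real^'d^'k \<Rightarrow> real)"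
    by (rule integrableI_nonneg[OF prior_meas]) (auto simp: prior_nonneg prior_nn[OF assms])
  show "(LINT A|lborel. prior_dens rho2 (A::real^'d^'k)) = 1"
    by (subst integral_eq_nn_integral[OF prior_meas]) (auto simp: prior_nonneg prior_nn[OF assms])
qed

lemma Qf_cont: "continuous_on UNIV (Qf X Z)"
  unfolding Qf_def[abs_def] by (intro continuous_intros)

lemma Qf_meas: "Qf X Z \<in> borel_measurable lborel"
  unfolding measurable_lborel2 by (rule borel_measurable_continuous_onI[OF Qf_cont])

lemma lik_eq:
  fixes X :: "real^'d^'n" and Z :: "real^'k^'n" and A :: "real^'d^'k"
  assumes cz: "clustering Z"
  shows "lik s2 X Z A = (2 * pi * s2) powr (- real (CARD('n) * CARD('d)) / 2)
     * exp (- KM X Z / (2 * s2)) * exp (- Qf X Z A / (2 * s2))"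
proof -
  have "- (KM X Z + Qf X Z A) / (2 * s2) = - KM X Z / (2 * s2) + - Qf X Z A / (2 * s2)"
    by (metis add_divide_distrib minus_add_distrib)
  then have e: "exp (- (KM X Z + Qf X Z A) / (2 * s2)) = exp (- KM X Z / (2 * s2)) * exp (- Qf X Z A / (2 * s2))"
    by (simp only: exp_add)
  show ?thesis
    unfolding lik_def tr_decomp[OF cz] e by (simp only: mult.assoc)
qed

definition Jf :: "real \<Rightarrow> real \<Rightarrow> real^'d^'n \<Rightarrow> real^'k^'n \<Rightarrow> real" where
  "Jf s2 rho2 X Z = (LINT A|lborel. exp (- Qf X Z A / (2 * s2)) * prior_dens rho2 (A::real^'d^'k))"

lemma marg_eq:
  fixes X :: "real^'d^'n" and Z :: "real^'k^'n"
  assumes cz: "clustering Z"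
  shows "marg_lik s2 rho2 X Z = (2 * pi * s2) powr (- real (CARD('n) * CARD('d)) / 2)
     * exp (- KM X Z / (2 * s2)) * Jf s2 rho2 X Z"
  unfolding marg_lik_def Jf_def lik_eq[OF cz]
  by (simp add: mult.assoc)

lemma J_integrable:
  fixes X :: "real^'d^'n" and Z :: "real^'k^'n"
  assumes "rho2 > 0" "s2 > 0"
  shows "integrable lborel (\<lambda>A::real^'d^'k. exp (- Qf X Z A / (2 * s2)) * prior_dens rho2 A)"
proof (rule Bochner_Integration.integrable_bound[OF prior_int(1)[OF assms(1)]])
  show "(\<lambda>A::real^'d^'k. exp (- Qf X Z A / (2 * s2)) * prior_dens rho2 A) \<in> borel_measurable lborel"
    using Qf_meas[of X Z] prior_meas[of rho2] by measurable
  show "AE A in lborel. norm (exp (- Qf X Z A / (2 * s2)) * prior_dens rho2 A) \<le> norm (prior_dens rho2 A)"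
  proof (rule AE_I2)
    fix A :: "real^'d^'k"
    have "exp (- Qf X Z A / (2 * s2)) \<le> 1"
      using Qf_nonneg[of X Z A] assms(2) by simp
    then show "norm (exp (- Qf X Z A / (2 * s2)) * prior_dens rho2 A) \<le> norm (prior_dens rho2 A)"
      using prior_nonneg[of rho2 A] by (simp add: mult_left_le_one_le)
  qed
qed

lemma J_le1:
  fixes X :: "real^'d^'n" and Z :: "real^'k^'n"
  assumes "rho2 > 0" "s2 > 0"
  shows "Jf s2 rho2 X Z \<le> 1"
proof -
  have "Jf s2 rho2 X Z \<le> (LINT A|lborel. prior_dens rho2 (A::real^'d^'k))"
    unfolding Jf_def
  proof (rule integral_mono[OF J_integrable[OF assms] prior_int(1)[OF assms(1)]])
    fix A :: "real^'d^'k"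
    have "exp (- Qf X Z A / (2 * s2)) \<le> 1"
      using Qf_nonneg[of X Z A] assms(2) by simp
    then show "exp (- Qf X Z A / (2 * s2)) * prior_dens rho2 A \<le> prior_dens rho2 A"
      using prior_nonneg[of rho2 A] by (simp add: mult_left_le_one_le)
  qed
  then show ?thesis using prior_int(2)[OF assms(1), where 'd='d and 'k='k] by linarith
qed

lemma normal_mono_abs:
  fixes x r sg :: real
  assumes "\<bar>x\<bar> \<le> r" "sg > 0"
  shows "normal_density 0 sg r \<le> normal_density 0 sg x"
proof -
  have "\<bar>x\<bar>^2 \<le> r^2" using assms(1) by (intro power_mono) auto
  then have "x^2 \<le> r^2" by simp
  then have "- (r^2) / (2 * sg^2) \<le> - (x^2) / (2 * sg^2)"
    using assms(2) by (intro divide_right_mono) auto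
  then show ?thesis unfolding normal_density_def
    by (intro mult_left_mono) auto
qed

lemma sq_le_of_abs:
  fixes x s :: real
  assumes "\<bar>x\<bar> \<le> sqrt s" "s \<ge> 0"
  shows "x^2 \<le> s"
proof -
  have "\<bar>x\<bar>^2 \<le> (sqrt s)^2" using assms(1) by (intro power_mono) auto
  then show ?thesis using assms(2) by simp
qed

lemma J_lower:
  fixes X :: "real^'d^'n" and Z :: "real^'k^'n"
  assumes rho: "rho2 > 0" and s0: "s2 > 0" and s1: "s2 \<le> 1"
  defines "R \<equiv> (\<Sum>k\<in>UNIV. \<Sum>d\<in>UNIV. \<bar>cmean X Z k $ d\<bar>) + 1"
  shows "exp (- real (CARD('n) * CARD('d)) / 2)
     * normal_density 0 (sqrt rho2) R ^ (CARD('k) * CARD('d)) * (2 * sqrt s2) ^ (CARD('k) * CARD('d))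
     \<le> Jf s2 rho2 X Z"
proof -
  define Mv :: "'k \<Rightarrow> 'd \<Rightarrow> real" where "Mv k d = cmean X Z k $ d" for k d
  define l :: "real^'d^'k" where "l = (\<chi> k d. Mv k d - sqrt s2)"
  define u :: "real^'d^'k" where "u = (\<chi> k d. Mv k d + sqrt s2)"
  define pmin where "pmin = normal_density 0 (sqrt rho2) R"
  define c0 where "c0 = exp (- real (CARD('n) * CARD('d)) / 2) * pmin ^ (CARD('k) * CARD('d))"
  have sig: "sqrt rho2 > 0" using rho by simp
  have pmin0: "pmin \<ge> 0" unfolding pmin_def by simp
  have c00: "c0 \<ge> 0" unfolding c0_def using pmin0 by simp
  have inB: "\<bar>A$k$d - Mv k d\<bar> \<le> sqrt s2" if "A \<in> cbox l u" for A :: "real^'d^'k" and k d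
  proof -
    have "l \<bullet> axis k (axis d 1) \<le> A \<bullet> axis k (axis d 1) \<and> A \<bullet> axis k (axis d 1) \<le> u \<bullet> axis k (axis d 1)"
      using that axis2_in_Basis[of k d] unfolding mem_box by blast
    then show ?thesis unfolding inner_axis2 l_def u_def by auto
  qed
  have pt: "indicator (cbox l u) A * c0 \<le> exp (- Qf X Z A / (2 * s2)) * prior_dens rho2 A"
    for A :: "real^'d^'k"
  proof (cases "A \<in> cbox l u")
    case False
    then show ?thesis using prior_nonneg[of rho2 A] by simp
  next
    case True
    have "Qf X Z A \<le> (\<Sum>n\<in>(UNIV::'n set). \<Sum>d\<in>(UNIV::'d set). s2)"
      unfolding Qf_def
    proof (intro sum_mono)
      fix n d
      have "\<bar>cmean X Z (cl Z n) $ d - A $ cl Z n $ d\<bar> \<le> sqrt s2"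
        using inB[OF True, of "cl Z n" d] unfolding Mv_def by (simp add: abs_minus_commute)
      then show "(cmean X Z (cl Z n) $ d - A $ cl Z n $ d)\<^sup>2 \<le> s2"
        using s0 by (intro sq_le_of_abs) auto
    qed
    also have "\<dots> = real (CARD('n) * CARD('d)) * s2" by simp
    finally have Q: "Qf X Z A \<le> real (CARD('n) * CARD('d)) * s2" .
    have "- real (CARD('n) * CARD('d)) / 2 \<le> - Qf X Z A / (2 * s2)"
    proof -
      have "Qf X Z A / (2 * s2) \<le> real (CARD('n) * CARD('d)) * s2 / (2 * s2)"
        using Q s0 by (intro divide_right_mono) auto
      also have "\<dots> = real (CARD('n) * CARD('d)) / 2" using s0 by simp
      finally show ?thesis by simp
    qed
    then have e: "exp (- real (CARD('n) * CARD('d)) / 2) \<le> exp (- Qf X Z A / (2 * s2))" by simp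
    have "pmin ^ (CARD('k) * CARD('d)) = (pmin ^ CARD('d)) ^ CARD('k)"
      by (simp add: power_mult[symmetric] mult.commute)
    also have "\<dots> = (\<Prod>k\<in>(UNIV::'k set). \<Prod>d\<in>(UNIV::'d set). pmin)"
      by simp
    also have "\<dots> \<le> prior_dens rho2 A"
      unfolding prior_dens_def
    proof (rule prod_mono, rule conjI)
      fix k
      show "0 \<le> (\<Prod>d\<in>(UNIV::'d set). pmin)" using pmin0 by simp
      show "(\<Prod>d\<in>(UNIV::'d set). pmin) \<le> (\<Prod>d\<in>UNIV. normal_density 0 (sqrt rho2) (A $ k $ d))"
      proof (rule prod_mono, rule conjI)
        fix d
        show "0 \<le> pmin" by (rule pmin0)
        have "\<bar>Mv k d\<bar> \<le> (\<Sum>d\<in>UNIV. \<bar>Mv k d\<bar>)" by (rule member_le_sum) auto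
        also have "\<dots> \<le> (\<Sum>k\<in>UNIV. \<Sum>d\<in>UNIV. \<bar>Mv k d\<bar>)"
          by (rule member_le_sum[where f="\<lambda>k. \<Sum>d\<in>UNIV. \<bar>Mv k d\<bar>"]) (auto intro: sum_nonneg)
        finally have "\<bar>Mv k d\<bar> \<le> R - 1" unfolding R_def Mv_def by simp
        moreover have "sqrt s2 \<le> 1" using s1 s0 by simp
        ultimately have "\<bar>A$k$d\<bar> \<le> R" using inB[OF True, of k d] by linarith
        then show "pmin \<le> normal_density 0 (sqrt rho2) (A $ k $ d)"
          unfolding pmin_def using sig by (rule normal_mono_abs)
      qed
    qed
    finally have p: "pmin ^ (CARD('k) * CARD('d)) \<le> prior_dens rho2 A" .
    have "c0 \<le> exp (- Qf X Z A / (2 * s2)) * prior_dens rho2 A"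
      unfolding c0_def by (intro mult_mono e p) (auto simp: pmin0)
    then show ?thesis using True by simp
  qed
  have int1: "integrable lborel (\<lambda>A::real^'d^'k. indicator (cbox l u) A * c0)"
    using emeasure_lborel_cbox_finite[of l u] by (intro integrable_mult_left integrable_real_indicator) (auto simp: top_unique)
  have "(LINT A|lborel. indicator (cbox l u) A * c0) \<le> Jf s2 rho2 X Z"
    unfolding Jf_def
    by (rule integral_mono[OF int1 J_integrable[OF rho s0]]) (rule pt)
  moreover have "(LINT A|lborel. indicator (cbox l u) A * c0) = measure lborel (cbox l u) * c0"
    by simp
  moreover have "measure lborel (cbox l u) = (2 * sqrt s2) ^ (CARD('k) * CARD('d))"
  proof -
    have ul: "(u - l) \<bullet> b = 2 * sqrt s2" if "b \<in> Basis" for b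
      using that by (elim basis_cases) (simp add: inner_axis2 u_def l_def)
    have le: "\<forall>b\<in>Basis. l \<bullet> b \<le> u \<bullet> b"
    proof
      fix b :: "real^'d^'k" assume "b \<in> Basis"
      then have "(u - l) \<bullet> b \<ge> 0" using ul s0 by simp
      then show "l \<bullet> b \<le> u \<bullet> b" by (simp add: inner_diff_left)
    qed
    have "measure lborel (cbox l u) = (\<Prod>b\<in>(Basis::(real^'d^'k) set). 2 * sqrt s2)"
      unfolding measure_lborel_cbox_eq using le ul by simp
    also have "\<dots> = (2 * sqrt s2) ^ (CARD('k) * CARD('d))" by simp
    finally show ?thesis .
  qed
  ultimately show ?thesis unfolding c0_def pmin_def by (simp add: mult_ac)
qed

lemma lim_sln: "((\<lambda>s::real. s * ln s) \<longlongrightarrow> 0) (at_right 0)"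
  by real_asymp
lemma lim_sln2: "((\<lambda>s::real. s * ln (2 * pi * s)) \<longlongrightarrow> 0) (at_right 0)"
  by real_asymp

lemma theta_lim:
  assumes "l > (0::real)"
  shows "((\<lambda>s. exp (- l / (2 * s))) \<longlongrightarrow> 0) (at_right 0)"
proof -
  have "filterlim (\<lambda>s::real. (l / 2) * inverse s) at_top (at_right 0)"
    using assms by (intro filterlim_tendsto_pos_mult_at_top[OF tendsto_const] filterlim_inverse_at_top_right) auto
  then have "filterlim (\<lambda>s::real. - ((l / 2) * inverse s)) at_bot (at_right 0)"
    by (simp add: filterlim_uminus_at_top)
  then have lim: "((\<lambda>s. exp (- ((l / 2) * inverse s))) \<longlongrightarrow> 0) (at_right 0)"
    by (rule filterlim_compose[OF exp_at_bot])
  have eq: "(\<lambda>s. exp (- ((l / 2) * inverse s))) = (\<lambda>s::real. exp (- l / (2 * s)))"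
    by (rule ext, cases "s = 0") (simp_all add: field_simps)
  show ?thesis using lim unfolding eq .
qed

lemma gamma_part_lim:
  assumes "l > (0::real)" "N \<ge> (1::nat)"
  shows "((\<lambda>s. s * (ln (Gamma (exp (- l / (2 * s)) + 1)) - ln (Gamma (exp (- l / (2 * s)) + real N)) + c))
     \<longlongrightarrow> 0) (at_right 0)"
proof -
  have th: "((\<lambda>s. exp (- l / (2 * s))) \<longlongrightarrow> 0) (at_right 0)" by (rule theta_lim[OF assms(1)])
  have th1: "((\<lambda>s. exp (- l / (2 * s)) + 1) \<longlongrightarrow> 0 + 1) (at_right 0)"
    by (rule tendsto_add[OF th tendsto_const])
  have thN: "((\<lambda>s. exp (- l / (2 * s)) + real N) \<longlongrightarrow> 0 + real N) (at_right 0)"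
    by (rule tendsto_add[OF th tendsto_const])
  have nz: "x \<notin> \<int>\<^sub>\<le>\<^sub>0" if "x > (0::real)" for x
    using that nonpos_Ints_nonpos by force
  have c1: "isCont Gamma (0 + 1 :: real)"
    using isCont_Gamma[OF continuous_ident, of "0 + 1 :: real"] nz[of "0+1"] by simp
  have cN: "isCont Gamma (0 + real N)"
    using isCont_Gamma[OF continuous_ident, of "0 + real N"] nz[of "0 + real N"] assms(2) by simp
  have g1: "((\<lambda>s. Gamma (exp (- l / (2 * s)) + 1)) \<longlongrightarrow> Gamma (0 + 1)) (at_right 0)"
    by (rule isCont_tendsto_compose[OF c1 th1])
  have gN: "((\<lambda>s. Gamma (exp (- l / (2 * s)) + real N)) \<longlongrightarrow> Gamma (0 + real N)) (at_right 0)"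
    by (rule isCont_tendsto_compose[OF cN thN])
  have pos1: "Gamma (0 + 1 :: real) \<noteq> 0" using Gamma_real_pos[of "0+1::real"] by simp
  have "0 < Gamma (real N)" by (rule Gamma_real_pos) (use assms(2) in simp)
  then have posN: "Gamma (0 + real N) \<noteq> 0" by simp
  have L: "((\<lambda>s. ln (Gamma (exp (- l / (2 * s)) + 1)) - ln (Gamma (exp (- l / (2 * s)) + real N)) + c)
     \<longlongrightarrow> ln (Gamma (0 + 1)) - ln (Gamma (0 + real N)) + c) (at_right 0)"
    by (intro tendsto_add tendsto_diff tendsto_ln g1 gN pos1 posN tendsto_const)
  have "((\<lambda>s. s * (ln (Gamma (exp (- l / (2 * s)) + 1)) - ln (Gamma (exp (- l / (2 * s)) + real N)) + c))
     \<longlongrightarrow> 0 * (ln (Gamma (0 + 1)) - ln (Gamma (0 + real N)) + c)) (at_right 0)"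
    by (rule tendsto_mult[OF tendsto_ident_at L])
  then show ?thesis by simp
qed

lemma J_part_lim:
  fixes J :: "real \<Rightarrow> real"
  assumes c0: "c0 > 0"
    and lo: "\<And>s. 0 < s \<Longrightarrow> s < 1 \<Longrightarrow> c0 * (2 * sqrt s) ^ m \<le> J s"
    and hi: "\<And>s. 0 < s \<Longrightarrow> s < 1 \<Longrightarrow> J s \<le> 1"
  shows "((\<lambda>s. s * ln (J s)) \<longlongrightarrow> 0) (at_right 0)"
proof (rule tendsto_sandwich[where f="\<lambda>s. s * (ln c0 + real m * (ln 2 + ln s / 2))" and h="\<lambda>_. 0"])
  have ev: "eventually (\<lambda>s::real. 0 < s \<and> s < 1) (at_right 0)"
    unfolding eventually_at_right_field by (intro exI[of _ 1]) auto
  show "eventually (\<lambda>s. s * (ln c0 + real m * (ln 2 + ln s / 2)) \<le> s * ln (J s)) (at_right 0)"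
    using ev
  proof eventually_elim
    case (elim s)
    then have sq: "sqrt s > 0" by simp
    have pos: "c0 * (2 * sqrt s) ^ m > 0" using c0 sq by simp
    have "ln (c0 * (2 * sqrt s) ^ m) = ln c0 + real m * (ln 2 + ln s / 2)"
      using c0 sq elim by (simp add: ln_mult ln_realpow ln_sqrt algebra_simps)
    moreover have "ln (c0 * (2 * sqrt s) ^ m) \<le> ln (J s)"
      using lo[of s] elim pos by (subst ln_le_cancel_iff) auto
    ultimately show ?case using elim by (intro mult_left_mono) auto
  qed
  show "eventually (\<lambda>s. s * ln (J s) \<le> 0) (at_right 0)"
    using ev
  proof eventually_elim
    case (elim s)
    have "c0 * (2 * sqrt s) ^ m > 0" using c0 elim by simp
    then have "J s > 0" using lo[of s] elim by linarith
    then have "ln (J s) \<le> 0" using hi[of s] elim by simp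
    then show ?case using elim by (simp add: mult_nonneg_nonpos)
  qed
  show "((\<lambda>_. 0::real) \<longlongrightarrow> 0) (at_right 0)" by simp
  have "((\<lambda>s. s * (ln c0 + real m * ln 2) + (real m / 2) * (s * ln s)) \<longlongrightarrow> 0 * (ln c0 + real m * ln 2) + (real m / 2) * 0) (at_right 0)"
    by (intro tendsto_add tendsto_mult tendsto_const lim_sln tendsto_ident_at)
  moreover have "\<And>s. s * (ln c0 + real m * (ln 2 + ln s / 2)) = s * (ln c0 + real m * ln 2) + (real m / 2) * (s * ln s)"
    by (simp add: algebra_simps)
  ultimately show "((\<lambda>s. s * (ln c0 + real m * (ln 2 + ln s / 2))) \<longlongrightarrow> 0) (at_right 0)"
    by simp
qed

theorem mainTheorem4:
  fixes X :: "real^'d^'n" and Z :: "real^'k^'n" and lambda2 rho2 :: real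
  assumes "lambda2 > 0" and "rho2 > 0" and "clustering Z"
    and "proj_obj lambda2 X Z \<noteq> 0"
  shows "(\<lambda>s2. - 2 * s2 * ln (joint lambda2 rho2 s2 X Z)) \<sim>[at_right 0] (\<lambda>_. proj_obj lambda2 X Z)
         \<and> proj_obj lambda2 X Z = kmeans_obj lambda2 X Z"
proof -
  note lam = assms(1) and rho = assms(2) and cz = assms(3) and pnz = assms(4)
  define R where "R = (\<Sum>k\<in>UNIV. \<Sum>d\<in>UNIV. \<bar>cmean X Z k $ d\<bar>) + 1"
  define m where "m = CARD('k) * CARD('d)"
  define c0 where "c0 = exp (- real (CARD('n) * CARD('d)) / 2) * normal_density 0 (sqrt rho2) R ^ m"
  have c0pos: "c0 > 0" unfolding c0_def using rho by (simp add: normal_density_pos)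
  define J where "J s = Jf s rho2 X Z" for s
  have Jlo: "c0 * (2 * sqrt s) ^ m \<le> J s" if "0 < s" "s < 1" for s
    using J_lower[OF rho that(1), of X Z] that unfolding J_def c0_def m_def R_def by simp
  have Jhi: "J s \<le> 1" if "0 < s" "s < 1" for s
    using J_le1[OF rho that(1), of X Z] unfolding J_def by simp
  have LJ: "((\<lambda>s. s * ln (J s)) \<longlongrightarrow> 0) (at_right 0)"
    by (rule J_part_lim[OF c0pos Jlo Jhi])
  define P :: real where "P = (\<Prod>k\<in>UNIV. fact (csize Z k - 1))"
  have Ppos: "P > 0" unfolding P_def by (intro prod_pos) auto
  have N1: "CARD('n) \<ge> 1" by (simp add: Suc_le_eq)
  have K1: "CARD('k) \<ge> 1" by (simp add: Suc_le_eq)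
  define th where "th s = exp (- lambda2 / (2 * s))" for s
  define G where "G s = ln (Gamma (th s + 1)) - ln (Gamma (th s + real CARD('n))) + ln P" for s
  have LG: "((\<lambda>s. s * G s) \<longlongrightarrow> 0) (at_right 0)"
    unfolding G_def th_def by (rule gamma_part_lim[OF lam N1])
  define E where "E s = real (CARD('n) * CARD('d)) * (s * ln (2 * pi * s)) - 2 * (s * ln (J s)) - 2 * (s * G s)" for s
  have LE: "(E \<longlongrightarrow> 0) (at_right 0)"
  proof -
    have "(E \<longlongrightarrow> real (CARD('n) * CARD('d)) * 0 - 2 * 0 - 2 * 0) (at_right 0)"
      unfolding E_def[abs_def] by (intro tendsto_diff tendsto_mult tendsto_const lim_sln2 LJ LG)
    then show ?thesis by simp
  qed
  define F where "F s = - 2 * s * ln (joint lambda2 rho2 s X Z)" for s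
  have ev: "eventually (\<lambda>s::real. 0 < s \<and> s < 1) (at_right 0)"
    unfolding eventually_at_right_field by (intro exI[of _ 1]) auto
  have key: "eventually (\<lambda>s. F s = KM X Z + (real CARD('k) - 1) * lambda2 + E s) (at_right 0)"
    using ev
  proof eventually_elim
    case (elim s)
    then have s0: "s > 0" and s1: "s < 1" by auto
    have Jpos: "J s > 0" using Jlo[OF s0 s1] c0pos s0 by (smt (verit) mult_pos_pos real_sqrt_gt_zero zero_less_power)
    have thpos: "th s > 0" unfolding th_def by simp
    define C where "C = (2 * pi * s) powr (- real (CARD('n) * CARD('d)) / 2)"
    have Cpos: "C > 0" unfolding C_def using s0 by simp
    have lnC: "ln C = (- real (CARD('n) * CARD('d)) / 2) * ln (2 * pi * s)"
      unfolding C_def using s0 by (simp add: ln_powr)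
    have marg: "marg_lik s rho2 X Z = C * exp (- KM X Z / (2 * s)) * J s"
      unfolding C_def J_def by (rule marg_eq[OF cz])
    have g1: "Gamma (th s + 1) > 0" using thpos by (intro Gamma_real_pos) simp
    have gN: "Gamma (th s + real CARD('n)) > 0" using thpos N1 by (intro Gamma_real_pos) simp
    have crp: "crp_prob (th s) Z = th s ^ (CARD('k) - 1) * Gamma (th s + 1) / Gamma (th s + real CARD('n)) * P"
      unfolding crp_prob_def P_def by simp
    have lncrp: "ln (crp_prob (th s) Z) = real (CARD('k) - 1) * (- lambda2 / (2 * s)) + G s"
      unfolding crp G_def using thpos g1 gN Ppos
      by (simp add: ln_mult ln_div ln_realpow th_def)
    have lnmarg: "ln (marg_lik s rho2 X Z) = ln C + (- KM X Z / (2 * s)) + ln (J s)"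
      unfolding marg using Cpos Jpos by (simp add: ln_mult)
    have crppos: "crp_prob (th s) Z > 0" unfolding crp using thpos g1 gN Ppos by simp
    have margpos: "marg_lik s rho2 X Z > 0" unfolding marg using Cpos Jpos by simp
    have "ln (joint lambda2 rho2 s X Z) = ln (marg_lik s rho2 X Z) + ln (crp_prob (th s) Z)"
      unfolding joint_def th_def[symmetric] using crppos margpos by (simp add: ln_mult)
    also have "\<dots> = ln C + (- KM X Z / (2 * s)) + ln (J s) + real (CARD('k) - 1) * (- lambda2 / (2 * s)) + G s"
      unfolding lnmarg lncrp by simp
    finally have lj: "ln (joint lambda2 rho2 s X Z) = ln C + (- KM X Z / (2 * s)) + ln (J s) + real (CARD('k) - 1) * (- lambda2 / (2 * s)) + G s" .
    have k1: "real (CARD('k) - 1) = real CARD('k) - 1" using K1 by (simp add: of_nat_diff)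
    show ?case unfolding F_def E_def lj lnC k1 using s0
      by (simp add: field_simps)
  qed
  have "(F \<longlongrightarrow> KM X Z + (real CARD('k) - 1) * lambda2 + 0) (at_right 0)"
  proof -
    have h: "((\<lambda>s. KM X Z + (real CARD('k) - 1) * lambda2 + E s) \<longlongrightarrow> KM X Z + (real CARD('k) - 1) * lambda2 + 0) (at_right 0)"
      by (intro tendsto_add tendsto_const LE)
    show ?thesis by (subst tendsto_cong[OF key]) (rule h)
  qed
  then have LF: "(F \<longlongrightarrow> proj_obj lambda2 X Z) (at_right 0)"
    using proj_KM[OF cz, of lambda2 X] by simp
  have "((\<lambda>s. F s / proj_obj lambda2 X Z) \<longlongrightarrow> proj_obj lambda2 X Z / proj_obj lambda2 X Z) (at_right 0)"
    by (intro tendsto_divide LF tendsto_const pnz)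
  then have "((\<lambda>s. F s / proj_obj lambda2 X Z) \<longlongrightarrow> 1) (at_right 0)" using pnz by simp
  then have "F \<sim>[at_right 0] (\<lambda>_. proj_obj lambda2 X Z)" by (rule asymp_equivI')
  then show ?thesis unfolding F_def using proj_KM[OF cz, of lambda2 X] kmeans_KM[OF cz, of lambda2 X] by simp
qed

end
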